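(* Consider the stochastic variant of Algorithm PDS-SPP described in the context, in which $y_k$ is computed as in PDS-SPP and the $x$-update uses a random vector $v_k$ in place of $y_k$, where conditionally on all randomness prior to iteration $k$, $\mathbb E[v_k]=y_k$ and $\mathbb E[\|v_k-y_k\|_*^2]\le\sigma_k^2$. Suppose $$\tau_1=0,\quad\beta_k\tau_k\le\beta_{k-1}(\tau_{k-1}+1),\quad\beta_{k-1}=\beta_k\lambda_k,\quad2\tilde L\lambda_k\le p_{k-1}\tau_k\quad\text{for all }k\ge2.$$ Let $$A=\sum_{k=1}^N\beta_k\Big[-\langle\hat x_k,y\rangle+\langle x,y_k\rangle+\langle v_k,\hat x_k-x\rangle-\tilde f^*(y_k)+\tilde f^*(y)+\frac{p_k}{T_k}\sum_{t=1}^{T_k}V(x_{k-1},x_k^t)\Big].$$ Then for all fixed $(x,y)\in\mathcal X\times\mathcal Y$, $$\mathbb E[A]\ge\mathbb E\Big[-\beta_N\langle x_{N-1}-\hat x_N,y_N-y\rangle+\frac{\beta_Np_N}{4}\|x_{N-1}-\hat x_N\|^2-\sum_{k=1}^N\frac{\beta_k\sigma_k^2}{p_k}+\beta_N(\tau_N+1)W(y_N,y)\Big].$$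
   Context: Setting. $\mathcal X$ closed convex subset of a finite-dimensional space with norm $\|\cdot\|$ (dual $\|\cdot\|_*$); $\mathcal Z$ closed convex with norm $|\cdot|$; $\mathcal A$ linear; $h$ convex on $\mathcal Z$; $\mu\ge0$; $\nu$ $1$-strongly convex on $\mathcal X$ w.r.t. $\|\cdot\|$; $\tilde f$ convex differentiable with $\tilde L$-Lipschitz gradient w.r.t. $\|\cdot\|$; $\tilde f^*$ its conjugate, $\mathcal Y=\mathrm{dom}\,\tilde f^*$; $\zeta$ $1$-strongly convex on $\mathcal Z$. $U,V,W$ are the Bregman functions of $\zeta,\nu,\tilde f^*$, e.g. $V(\hat x,x)=\nu(x)-\nu(\hat x)-\langle\nu'(\hat x),x-\hat x\rangle$, $W(v,y)=\tilde f^*(y)-\tilde f^*(v)-\langle(\tilde f^* )'(v),y-v\rangle$. Stochastic PDS-SPP: $x_0\in\mathcal X$, $y_0\in\mathcal Y$, $z_0\in\mathcal Z$, $\hat x_0=x_{-1}=x_0$; for $k=1,\dots,N$: $\tilde x_k=x_{k-1}+\lambda_k(\hat x_{k-1}-x_{k-2})$, $y_k=\arg\min_{y\in\mathcal Y}\langle-\tilde x_k,y\rangle+\tilde f^*(y)+\tau_kW(y_{k-1},y)$, random $v_k$ as in the claim; $x_k^0=x_{k-1}$, $z_k^0=z_{k-1}$, $x_k^{-1}=x_{k-1}^{T_{k-1}-1}$ ($x_1^{-1}=x_0$); for $t=1,\dots,T_k$: $\tilde u_k^t=x_k^{t-1}+\alpha_k^t(x_k^{t-1}-x_k^{t-2})$,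 $z_k^t=\arg\min_{z\in\mathcal Z}h(z)+\langle-\mathcal A\tilde u_k^t,z\rangle+q_k^tU(z_k^{t-1},z)$, $x_k^t=\arg\min_{x\in\mathcal X}\mu\nu(x)+\langle v_k+\mathcal A^\top z_k^t,x\rangle+\eta_k^tV(x_k^{t-1},x)+p_kV(x_{k-1},x)$; $x_k=x_k^{T_k}$, $z_k=z_k^{T_k}$, $\hat x_k=\frac1{T_k}\sum_tx_k^t$. Parameters: positive integers $T_k$, positive $\beta_k,p_k,q_k^t,\eta_k^t$, nonnegative $\lambda_k,\tau_k,\alpha_k^t$. *)

theory Defs
  imports "HOL-Analysis.Analysis" "HOL-Probability.Probability"
begin

definition is_norm :: "('a::real_vector \<Rightarrow> real) \<Rightarrow> bool" where
  "is_norm n \<longleftrightarrow> (\<forall>x. n x = 0 \<longleftrightarrow> x = 0) \<and> (\<forall>x y. n (x + y) \<le> n x + n y)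
                 \<and> (\<forall>c x. n (c *\<^sub>R x) = \<bar>c\<bar> * n x)"

text \<open>Dual norm, the dual space being identified with the space via the inner product.\<close>
definition dual_norm :: "('a::real_inner \<Rightarrow> real) \<Rightarrow> 'a \<Rightarrow> real" where
  "dual_norm n w = Sup {w \<bullet> u | u. n u \<le> 1}"

definition strongly_convex_wrt :: "'a::real_vector set \<Rightarrow> ('a \<Rightarrow> real) \<Rightarrow> real \<Rightarrow> ('a \<Rightarrow> real) \<Rightarrow> bool" where
  "strongly_convex_wrt S n c phi \<longleftrightarrow> convex S \<and>
     (\<forall>x\<in>S. \<forall>y\<in>S. \<forall>\<theta>::real. 0 \<le> \<theta> \<and> \<theta> \<le> 1 \<longrightarrow>
        phi (\<theta> *\<^sub>R x + (1 - \<theta>) *\<^sub>R y) \<le> \<theta> * phi x + (1 - \<theta>) * phi y - c / 2 * \<theta> * (1 - \<theta>) * (n (x - y))\<^sup>2)"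

definition is_subgrad :: "'a::real_inner set \<Rightarrow> ('a \<Rightarrow> real) \<Rightarrow> 'a \<Rightarrow> 'a \<Rightarrow> bool" where
  "is_subgrad S phi a g \<longleftrightarrow> (\<forall>x\<in>S. phi x \<ge> phi a + g \<bullet> (x - a))"

definition bregman :: "('a::real_inner \<Rightarrow> real) \<Rightarrow> 'a \<Rightarrow> 'a \<Rightarrow> 'a \<Rightarrow> real" where
  "bregman phi g a b = phi b - phi a - g \<bullet> (b - a)"

text \<open>Domain of the Fenchel conjugate of f, and the conjugate itself (finite on that domain).\<close>
definition conj_dom :: "('a::real_inner \<Rightarrow> real) \<Rightarrow> 'a set" where
  "conj_dom f = {y. bdd_above (range (\<lambda>x. y \<bullet> x - f x))}"

definition conj_fun :: "('a::real_inner \<Rightarrow> real) \<Rightarrow> 'a \<Rightarrow> real" where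
  "conj_fun f y = (SUP x. y \<bullet> x - f x)"

end

theory Submission
  imports Defs
begin


lemma nrm_basic:
  assumes "is_norm n"
  shows "n 0 = 0" "n (-x) = n x" "n x \<ge> 0" "n (x - y) = n (y - x)"
    "n (c *\<^sub>R x) = \<bar>c\<bar> * n x" "n (x + y) \<le> n x + n y" "n x = 0 \<longleftrightarrow> x = 0"
proof -
  show h: "n (c *\<^sub>R x) = \<bar>c\<bar> * n x" for c x using assms unfolding is_norm_def by blast
  show t: "n (x + y) \<le> n x + n y" for x y using assms unfolding is_norm_def by blast
  show z: "n x = 0 \<longleftrightarrow> x = 0" for x using assms unfolding is_norm_def by blast
  show "n 0 = 0" using z by simp
  show m: "n (-x) = n x" for x using h[of "-1" x] by simp
  show "n x \<ge> 0" using t[of x "-x"] m[of x] z[of 0] by simp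
  show "n (x - y) = n (y - x)" using m[of "x - y"] by simp
qed

lemma nrm_sum:
  assumes "is_norm n" "finite S"
  shows "n (\<Sum>i\<in>S. f i) \<le> (\<Sum>i\<in>S. n (f i))"
  using assms(2)
proof (induction S rule: finite_induct)
  case empty then show ?case using nrm_basic(7)[OF assms(1), of 0] by simp
next
  case (insert a S)
  then show ?case using nrm_basic(6)[OF assms(1), of "f a" "sum f S"] by simp
qed

lemma nrm_upper:
  fixes n :: "'a::euclidean_space \<Rightarrow> real"
  assumes "is_norm n"
  shows "n u \<le> (\<Sum>b\<in>Basis. n b) * norm u"
proof -
  have "n u = n (\<Sum>b\<in>Basis. (u \<bullet> b) *\<^sub>R b)" by (simp add: euclidean_representation)
  also have "\<dots> \<le> (\<Sum>b\<in>Basis. n ((u \<bullet> b) *\<^sub>R b))" by (rule nrm_sum[OF assms]) simp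
  also have "\<dots> = (\<Sum>b\<in>Basis. \<bar>u \<bullet> b\<bar> * n b)" using nrm_basic(5)[OF assms] by simp
  also have "\<dots> \<le> (\<Sum>b\<in>Basis. norm u * n b)"
    by (intro sum_mono mult_right_mono) (auto simp: Basis_le_norm nrm_basic(3)[OF assms])
  finally show ?thesis by (simp add: sum_distrib_left mult.commute)
qed

lemma nrm_equiv:
  fixes n :: "'a::euclidean_space \<Rightarrow> real"
  assumes "is_norm n"
  shows "\<exists>C>0. \<forall>u. norm u \<le> C * n u"
proof -
  define K where "K = (\<Sum>b\<in>Basis. n (b::'a))"
  have K0: "K \<ge> 0" unfolding K_def by (intro sum_nonneg) (simp add: nrm_basic(3)[OF assms])
  have lip: "\<bar>n x - n y\<bar> \<le> K * norm (x - y)" for x y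
  proof -
    have "n x \<le> n (x - y) + n y" using nrm_basic(6)[OF assms, of "x - y" y] by simp
    moreover have "n y \<le> n (y - x) + n x" using nrm_basic(6)[OF assms, of "y - x" x] by simp
    moreover have "n (x - y) \<le> K * norm (x - y)" using nrm_upper[OF assms] K_def by simp
    moreover have "n (y - x) = n (x - y)" using nrm_basic(4)[OF assms] by simp
    ultimately show ?thesis by linarith
  qed
  have cont: "continuous_on (sphere 0 1) n"
    unfolding continuous_on_iff
  proof (intro ballI allI impI)
    fix x e assume "x \<in> sphere (0::'a) 1" "(e::real) > 0"
    show "\<exists>d>0. \<forall>x'\<in>sphere 0 1. dist x' x < d \<longrightarrow> dist (n x') (n x) < e"
    proof (intro exI[of _ "e / (K + 1)"] conjI ballI impI)
      show "e / (K + 1) > 0" using \<open>e > 0\<close> K0 by simp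
      fix x' assume "dist x' x < e / (K + 1)"
      then have "(K + 1) * norm (x' - x) < e" using K0 by (simp add: dist_norm field_simps)
      moreover have "\<bar>n x' - n x\<bar> \<le> K * norm (x' - x)" by (rule lip)
      moreover have "K * norm (x' - x) \<le> (K + 1) * norm (x' - x)" by (simp add: mult_right_mono)
      ultimately show "dist (n x') (n x) < e" by (simp add: dist_real_def)
    qed
  qed
  obtain b :: 'a where b: "b \<in> Basis" using nonempty_Basis by blast
  have "sphere (0::'a) 1 \<noteq> {}" using b by (auto simp: sphere_def intro!: exI[of _ b])
  then obtain u0 where u0: "u0 \<in> sphere 0 1" and mn: "\<forall>y\<in>sphere 0 1. n u0 \<le> n y"
    using continuous_attains_inf[OF compact_sphere _ cont] by blast
  have "u0 \<noteq> 0" using u0 by auto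
  then have m0: "n u0 > 0" using nrm_basic(3,7)[OF assms, of u0] by linarith
  show ?thesis
  proof (intro exI[of _ "1 / n u0"] conjI allI)
    show "1 / n u0 > 0" using m0 by simp
    fix u :: 'a
    show "norm u \<le> 1 / n u0 * n u"
    proof (cases "u = 0")
      case True then show ?thesis using nrm_basic(1)[OF assms] by simp
    next
      case False
      then have "(1 / norm u) *\<^sub>R u \<in> sphere 0 1" by simp
      then have "n u0 \<le> n ((1 / norm u) *\<^sub>R u)" using mn by blast
      also have "\<dots> = n u / norm u" using nrm_basic(5)[OF assms] by simp
      finally have "n u0 * norm u \<le> n u" using False by (simp add: field_simps)
      then show ?thesis using m0 by (simp add: field_simps)
    qed
  qed
qed

lemma dual_norm_props:
  fixes n :: "'a::euclidean_space \<Rightarrow> real"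
  assumes "is_norm n"
  shows "w \<bullet> u \<le> dual_norm n w * n u" "dual_norm n w \<ge> 0"
proof -
  obtain C where C: "C > 0" "\<forall>u. norm u \<le> C * n u" using nrm_equiv[OF assms] by blast
  have bdd: "bdd_above {w \<bullet> u | u. n u \<le> 1}"
  proof (rule bdd_aboveI[of _ "norm w * C"])
    fix r assume "r \<in> {w \<bullet> u | u. n u \<le> 1}"
    then obtain u where u: "r = w \<bullet> u" "n u \<le> 1" by blast
    have "w \<bullet> u \<le> norm w * norm u" by (rule norm_cauchy_schwarz)
    also have "\<dots> \<le> norm w * (C * n u)" using C by (simp add: mult_left_mono)
    also have "\<dots> \<le> norm w * C" using u C by (simp add: mult_left_mono)
    finally show "r \<le> norm w * C" using u by simp
  qed
  have upper: "w \<bullet> u \<le> dual_norm n w" if "n u \<le> 1" for u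
    unfolding dual_norm_def by (rule cSup_upper[OF _ bdd]) (use that in blast)
  show "dual_norm n w \<ge> 0" using upper[of 0] nrm_basic(1)[OF assms] by simp
  show "w \<bullet> u \<le> dual_norm n w * n u"
  proof (cases "u = 0")
    case True then show ?thesis using nrm_basic(1)[OF assms] by simp
  next
    case False
    then have p: "n u > 0" using nrm_basic(3,7)[OF assms, of u] by linarith
    have "n ((1 / n u) *\<^sub>R u) = 1" using p nrm_basic(5)[OF assms] by simp
    then have "w \<bullet> ((1 / n u) *\<^sub>R u) \<le> dual_norm n w" using upper[of "(1 / n u) *\<^sub>R u"] by simp
    then have "w \<bullet> u / n u \<le> dual_norm n w" by simp
    then show ?thesis using p by (simp add: pos_divide_le_eq)
  qed
qed



lemma line_deriv:
  fixes f :: "'a::real_inner \<Rightarrow> real"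
  assumes "\<forall>a. (f has_derivative (\<lambda>d. gf a \<bullet> d)) (at a)"
  shows "((\<lambda>t. f (g + t *\<^sub>R d)) has_real_derivative (gf (g + t *\<^sub>R d) \<bullet> d)) (at t)"
proof -
  have 1: "((\<lambda>t. g + t *\<^sub>R d) has_derivative (\<lambda>h. h *\<^sub>R d)) (at t)"
    by (auto intro!: derivative_eq_intros)
  have "((\<lambda>t. f (g + t *\<^sub>R d)) has_derivative (\<lambda>h. gf (g + t *\<^sub>R d) \<bullet> (h *\<^sub>R d))) (at t)"
    using has_derivative_compose[OF 1 assms[rule_format, of "g + t *\<^sub>R d"]] by simp
  moreover have "(\<lambda>h. gf (g + t *\<^sub>R d) \<bullet> (h *\<^sub>R d)) = (*) (gf (g + t *\<^sub>R d) \<bullet> d)"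
    by (auto simp: mult.commute)
  ultimately show ?thesis by (simp add: has_field_derivative_def)
qed

lemma grad_ineq:
  fixes f :: "'a::real_inner \<Rightarrow> real"
  assumes cv: "convex_on UNIV f" and d: "\<forall>a. (f has_derivative (\<lambda>d. gf a \<bullet> d)) (at a)"
  shows "f u \<ge> f g + gf g \<bullet> (u - g)"
proof -
  define phi where "phi = (\<lambda>t::real. f (g + t *\<^sub>R (u - g)))"
  have "convex_on UNIV phi"
  proof (rule convex_onI)
    fix t x y :: real assume t: "0 < t" "t < 1"
    have "g + ((1 - t) * x + t * y) *\<^sub>R (u - g) = (1 - t) *\<^sub>R (g + x *\<^sub>R (u - g)) + t *\<^sub>R (g + y *\<^sub>R (u - g))"
      by (simp add: algebra_simps)
    then show "phi ((1 - t) *\<^sub>R x + t *\<^sub>R y) \<le> (1 - t) * phi x + t * phi y"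
      unfolding phi_def using convex_onD[OF cv, of t] t by simp
  qed simp
  moreover have "(phi has_real_derivative (gf g \<bullet> (u - g))) (at 0 within UNIV)"
    unfolding phi_def using line_deriv[OF d, of g "u - g" 0] by simp
  ultimately have "phi 1 - phi 0 \<ge> (gf g \<bullet> (u - g)) * (1 - 0)"
    by (intro convex_on_imp_above_tangent[where A = UNIV]) auto
  then show ?thesis unfolding phi_def by simp
qed

lemma descent:
  fixes f :: "'a::euclidean_space \<Rightarrow> real"
  assumes n: "is_norm n" and d: "\<forall>a. (f has_derivative (\<lambda>d. gf a \<bullet> d)) (at a)"
    and L: "\<forall>a b. dual_norm n (gf a - gf b) \<le> L * n (a - b)"
  shows "f (g + e) \<le> f g + gf g \<bullet> e + L / 2 * (n e)\<^sup>2"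
proof -
  define phi where "phi = (\<lambda>t::real. f (g + t *\<^sub>R e) - t * (gf g \<bullet> e) - L / 2 * t\<^sup>2 * (n e)\<^sup>2)"
  have "phi 1 \<le> phi 0"
  proof (rule DERIV_nonpos_imp_nonincreasing[of 0 1 phi])
    fix t :: real assume t: "0 \<le> t" "t \<le> 1"
    have D: "(phi has_real_derivative (gf (g + t *\<^sub>R e) \<bullet> e - gf g \<bullet> e - L / 2 * (2 * t) * (n e)\<^sup>2)) (at t)"
      unfolding phi_def
      by (auto intro!: derivative_eq_intros line_deriv[OF d])
    have "(gf (g + t *\<^sub>R e) - gf g) \<bullet> e \<le> dual_norm n (gf (g + t *\<^sub>R e) - gf g) * n e"
      by (rule dual_norm_props(1)[OF n])
    also have "\<dots> \<le> (L * n (t *\<^sub>R e)) * n e"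
      using L[rule_format, of "g + t *\<^sub>R e" g] nrm_basic(3)[OF n, of e]
      by (intro mult_right_mono) auto
    also have "\<dots> = L * t * (n e)\<^sup>2" using nrm_basic(5)[OF n, of t e] t by (simp add: power2_eq_square)
    finally have "gf (g + t *\<^sub>R e) \<bullet> e - gf g \<bullet> e - L / 2 * (2 * t) * (n e)\<^sup>2 \<le> 0"
      by (simp add: inner_diff_left)
    then show "\<exists>y. (phi has_real_derivative y) (at t) \<and> y \<le> 0" using D by blast
  qed simp
  then show ?thesis unfolding phi_def by simp
qed

lemma conj_at_grad:
  fixes f :: "'a::real_inner \<Rightarrow> real"
  assumes cv: "convex_on UNIV f" and d: "\<forall>a. (f has_derivative (\<lambda>d. gf a \<bullet> d)) (at a)"
  shows "gf g \<in> conj_dom f" "conj_fun f (gf g) = gf g \<bullet> g - f g"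
proof -
  have le: "gf g \<bullet> x - f x \<le> gf g \<bullet> g - f g" for x
    using grad_ineq[OF cv d, where u=x and g=g] by (simp add: inner_diff_right)
  then show "gf g \<in> conj_dom f" unfolding conj_dom_def by (auto intro!: bdd_aboveI)
  show "conj_fun f (gf g) = gf g \<bullet> g - f g"
    unfolding conj_fun_def by (rule cSup_eq_maximum) (use le in auto)
qed

lemma fenchel_young:
  assumes "y \<in> conj_dom f"
  shows "y \<bullet> u - f u \<le> conj_fun f y"
  using assms unfolding conj_dom_def conj_fun_def by (intro cSUP_upper) auto

lemma subgrad_conj:
  fixes f :: "'a::real_inner \<Rightarrow> real"
  assumes cv: "convex_on UNIV f" and d: "\<forall>a. (f has_derivative (\<lambda>d. gf a \<bullet> d)) (at a)"
    and y: "y \<in> conj_dom f" and sg: "is_subgrad (conj_dom f) (conj_fun f) y g"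
  shows "conj_fun f y = y \<bullet> g - f g" "gf g = y"
proof -
  have "conj_fun f (gf g) \<ge> conj_fun f y + g \<bullet> (gf g - y)"
    using sg conj_at_grad(1)[OF cv d, of g] unfolding is_subgrad_def by blast
  then have "conj_fun f y \<le> y \<bullet> g - f g"
    using conj_at_grad(2)[OF cv d, of g] by (simp add: inner_diff_right inner_commute)
  moreover have "conj_fun f y \<ge> y \<bullet> g - f g" using fenchel_young[OF y] .
  ultimately show eq: "conj_fun f y = y \<bullet> g - f g" by simp
  have mn: "f g - y \<bullet> g \<le> f x - y \<bullet> x" for x
    using fenchel_young[OF y, of x] eq by simp
  have "((\<lambda>x. f x - y \<bullet> x) has_derivative (\<lambda>h. gf g \<bullet> h - y \<bullet> h)) (at g)"
    using d by (auto intro!: derivative_eq_intros)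
  then have "(\<lambda>h. gf g \<bullet> h - y \<bullet> h) = (\<lambda>h. 0)"
    by (rule has_derivative_local_min) (use mn in auto)
  then have "gf g \<bullet> (gf g - y) - y \<bullet> (gf g - y) = 0" by metis
  then have "(gf g - y) \<bullet> (gf g - y) = 0" by (simp add: inner_diff_left)
  then show "gf g = y" by simp
qed

lemma W_bound:
  fixes f :: "'a::euclidean_space \<Rightarrow> real"
  assumes n: "is_norm n" and cv: "convex_on UNIV f" and d: "\<forall>a. (f has_derivative (\<lambda>d. gf a \<bullet> d)) (at a)"
    and L: "\<forall>a b. dual_norm n (gf a - gf b) \<le> L * n (a - b)"
    and y: "y \<in> conj_dom f" and y': "y' \<in> conj_dom f" and sg: "is_subgrad (conj_dom f) (conj_fun f) y g"
  shows "bregman (conj_fun f) g y y' \<ge> (y' - y) \<bullet> e - L / 2 * (n e)\<^sup>2"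
proof -
  have a: "conj_fun f y' \<ge> y' \<bullet> (g + e) - f (g + e)" by (rule fenchel_young[OF y'])
  have b: "f (g + e) \<le> f g + gf g \<bullet> e + L / 2 * (n e)\<^sup>2" by (rule descent[OF n d L])
  have c: "conj_fun f y = y \<bullet> g - f g" "gf g = y" using subgrad_conj[OF cv d y sg] by auto
  show ?thesis using a b c unfolding bregman_def
    by (simp add: inner_simps inner_commute algebra_simps)
qed

lemma L_nonneg:
  fixes f :: "'a::euclidean_space \<Rightarrow> real"
  assumes n: "is_norm n" and cv: "convex_on UNIV f" and d: "\<forall>a. (f has_derivative (\<lambda>d. gf a \<bullet> d)) (at a)"
    and L: "\<forall>a b. dual_norm n (gf a - gf b) \<le> L * n (a - b)"
  shows "L \<ge> 0"
proof -
  obtain b :: 'a where b: "b \<in> Basis" using nonempty_Basis by blast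
  then have "b \<noteq> 0" by auto
  then have nb: "n b > 0" using nrm_basic(3,7)[OF n, of b] by linarith
  have "f (0 + b) \<ge> f 0 + gf 0 \<bullet> ((0 + b) - 0)" by (rule grad_ineq[OF cv d])
  moreover have "f (0 + b) \<le> f 0 + gf 0 \<bullet> b + L / 2 * (n b)\<^sup>2" by (rule descent[OF n d L])
  ultimately have "L * (n b)\<^sup>2 \<ge> 0" by simp
  then show ?thesis using nb by (simp add: zero_le_mult_iff)
qed

lemma cross_term:
  fixes L c bp p t m W :: real
  assumes c: "c \<ge> 0" and bp: "bp > 0" and p: "p > 0" and L0: "L \<ge> 0"
    and cond: "2 * L * bp \<le> p * c" and W: "\<forall>s. W \<ge> s * t - L / 2 * s\<^sup>2 * m\<^sup>2"
  shows "bp * t \<le> bp * p / 4 * m\<^sup>2 + c * W"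
proof (cases "c = 0")
  case True
  have "t \<le> 0"
  proof (rule ccontr)
    assume "\<not> t \<le> 0"
    then have tp: "t > 0" by simp
    have "L * bp \<le> 0" using True cond by simp
    then have L00: "L = 0" using bp L0 by (simp add: mult_le_0_iff)
    define s where "s = (\<bar>W\<bar> + 1) / t"
    have 1: "W \<ge> s * t - L / 2 * s\<^sup>2 * m\<^sup>2" using W by blast
    have 2: "L / 2 * s\<^sup>2 * m\<^sup>2 = 0" using L00 by simp
    have 3: "s * t = \<bar>W\<bar> + 1" unfolding s_def using tp by simp
    show False using 1 2 3 by linarith
  qed
  then have "bp * t \<le> 0" using bp by (simp add: mult_nonneg_nonpos)
  moreover have "bp * p / 4 * m\<^sup>2 \<ge> 0" using bp p by simp
  ultimately show ?thesis using True by simp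
next
  case False
  then have cp: "c > 0" using c by simp
  have "W \<ge> (bp / c) * t - L / 2 * (bp / c)\<^sup>2 * m\<^sup>2" using W by blast
  then have "c * W \<ge> c * ((bp / c) * t - L / 2 * (bp / c)\<^sup>2 * m\<^sup>2)" using cp by (simp add: mult_left_mono)
  also have "c * ((bp / c) * t - L / 2 * (bp / c)\<^sup>2 * m\<^sup>2) = bp * t - (L * bp) * bp / (2 * c) * m\<^sup>2"
    using cp by (simp add: field_simps power2_eq_square)
  finally have 1: "c * W \<ge> bp * t - (L * bp) * bp / (2 * c) * m\<^sup>2" .
  have "(L * bp) * bp / (2 * c) \<le> (p * c / 2) * bp / (2 * c)"
    using cond bp cp by (intro divide_right_mono mult_right_mono) auto
  also have "\<dots> = bp * p / 4" using cp by (simp add: field_simps)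
  finally have "(L * bp) * bp / (2 * c) * m\<^sup>2 \<le> bp * p / 4 * m\<^sup>2" by (rule mult_right_mono) simp
  then show ?thesis using 1 by linarith
qed

lemma V_bound:
  assumes sc: "strongly_convex_wrt S n 1 nu" and a: "a \<in> S" and b: "b \<in> S"
    and sg: "is_subgrad S nu a ga"
  shows "bregman nu ga a b \<ge> 1 / 2 * (n (b - a))\<^sup>2"
proof -
  define B where "B = bregman nu ga a b"
  define NN where "NN = (n (b - a))\<^sup>2"
  have key: "B \<ge> (1 - \<theta>) * NN / 2" if th: "0 < \<theta>" "\<theta> \<le> 1" for \<theta>
  proof -
    have cS: "convex S" using sc unfolding strongly_convex_wrt_def by blast
    have pt: "\<theta> *\<^sub>R b + (1 - \<theta>) *\<^sub>R a \<in> S" using cS a b th unfolding convex_def by auto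
    have 1: "nu (\<theta> *\<^sub>R b + (1 - \<theta>) *\<^sub>R a) \<le> \<theta> * nu b + (1 - \<theta>) * nu a - 1 / 2 * \<theta> * (1 - \<theta>) * NN"
      using sc a b th unfolding strongly_convex_wrt_def NN_def by auto
    have 2: "nu (\<theta> *\<^sub>R b + (1 - \<theta>) *\<^sub>R a) \<ge> nu a + ga \<bullet> (\<theta> *\<^sub>R b + (1 - \<theta>) *\<^sub>R a - a)"
      using sg pt unfolding is_subgrad_def by blast
    have 3: "\<theta> *\<^sub>R b + (1 - \<theta>) *\<^sub>R a - a = \<theta> *\<^sub>R (b - a)" by (simp add: algebra_simps)
    have "\<theta> * (ga \<bullet> (b - a)) \<le> \<theta> * (nu b - nu a) - \<theta> * ((1 - \<theta>) * NN / 2)"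
      using 1 2 3 by (simp add: algebra_simps)
    then have "\<theta> * (ga \<bullet> (b - a)) \<le> \<theta> * (nu b - nu a - (1 - \<theta>) * NN / 2)"
      by (simp add: algebra_simps)
    then have "ga \<bullet> (b - a) \<le> nu b - nu a - (1 - \<theta>) * NN / 2" using th by simp
    then show ?thesis unfolding B_def bregman_def by simp
  qed
  have B0: "B \<ge> 0" using key[of 1] by simp
  show ?thesis
  proof (rule ccontr)
    assume "\<not> ?thesis"
    then have lt: "B < NN / 2" unfolding B_def NN_def by simp
    then have NNp: "NN > 0" using B0 by simp
    define th where "th = (NN / 2 - B) / NN"
    have "0 < th" "th \<le> 1" using lt NNp B0 unfolding th_def by (auto simp: field_simps)
    then have "B \<ge> (1 - th) * NN / 2" by (rule key)
    also have "(1 - th) * NN / 2 = (NN / 2 + B) / 2" using NNp unfolding th_def by (simp add: field_simps)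
    finally show False using lt by simp
  qed
qed

lemma jensen_nrm:
  assumes n: "is_norm n" and T: "T > 0"
  shows "(n ((1 / real T) *\<^sub>R (\<Sum>t=1..T. z t) - c))\<^sup>2 \<le> (1 / real T) * (\<Sum>t=1..T. (n (z t - c))\<^sup>2)"
proof -
  have e: "(1 / real T) *\<^sub>R (\<Sum>t=1..T. z t) - c = (1 / real T) *\<^sub>R (\<Sum>t=1..T. z t - c)"
  proof -
    have "(\<Sum>t=1..T. z t - c) = (\<Sum>t=1..T. z t) - real T *\<^sub>R c"
      by (simp add: sum_subtractf sum_constant_scaleR)
    then show ?thesis using T by (simp add: scaleR_diff_right)
  qed
  have "n ((1 / real T) *\<^sub>R (\<Sum>t=1..T. z t) - c) = (1 / real T) * n (\<Sum>t=1..T. z t - c)"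
    unfolding e nrm_basic(5)[OF n] by simp
  also have "\<dots> \<le> (1 / real T) * (\<Sum>t=1..T. n (z t - c))"
    by (intro mult_left_mono nrm_sum[OF n]) auto
  finally have 1: "n ((1 / real T) *\<^sub>R (\<Sum>t=1..T. z t) - c) \<le> (1 / real T) * (\<Sum>t=1..T. n (z t - c))" .
  have "(n ((1 / real T) *\<^sub>R (\<Sum>t=1..T. z t) - c))\<^sup>2 \<le> ((1 / real T) * (\<Sum>t=1..T. n (z t - c)))\<^sup>2"
    using 1 nrm_basic(3)[OF n] by (intro power_mono) auto
  also have "\<dots> = (1 / real T)\<^sup>2 * (\<Sum>t=1..T. n (z t - c))\<^sup>2" by (rule power_mult_distrib)
  also have "\<dots> \<le> (1 / real T)\<^sup>2 * ((\<Sum>t=1..T. (n (z t - c))\<^sup>2) * card {1..T})"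
    by (intro mult_left_mono sum_squared_le_sum_of_squares) auto
  also have "\<dots> = (1 / real T) * (\<Sum>t=1..T. (n (z t - c))\<^sup>2)" using T by (simp add: power2_eq_square)
  finally show ?thesis .
qed



lemma step_k:
  fixes xh xp xt ap yk ykp yy xx vk :: "'a::real_inner"
  assumes bk: "bk > 0" and pk: "pk > 0"
    and h3: "Fy - Fk = - (xt \<bullet> (yk - yy)) + tau * Wkk + (tau + 1) * Wk - tau * Wp"
    and hxt: "xt = xp + lam *\<^sub>R ap"
    and hP: "P \<ge> pk / 2 * na\<^sup>2"
    and hvy: "(vk - yk) \<bullet> (xh - xp) \<ge> - (D\<^sup>2 / pk) - pk / 4 * na\<^sup>2"
    and hcross: "bp * (ap \<bullet> (yk - ykp)) \<le> bp * pp / 4 * nap\<^sup>2 + bk * tau * Wkk"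
    and hW: "bk * tau * Wp \<le> bp * (taup + 1) * Wp"
    and hb: "bk * lam * (ap \<bullet> (yk - yy)) = bp * (ap \<bullet> (yk - yy))"
  shows "bk * (- (xh \<bullet> yy) + xx \<bullet> yk + vk \<bullet> (xh - xx) - Fk + Fy + P) \<ge>
    (bk * ((xh - xp) \<bullet> (yk - yy)) + bk * pk / 4 * na\<^sup>2 + bk * (tau + 1) * Wk)
    - (bp * (ap \<bullet> (ykp - yy)) + bp * pp / 4 * nap\<^sup>2 + bp * (taup + 1) * Wp)
    + bk * ((vk - yk) \<bullet> (xp - xx)) - bk * D\<^sup>2 / pk"
proof -
  define I1 where "I1 = (xh - xp) \<bullet> (yk - yy)"
  define I2 where "I2 = ap \<bullet> (yk - yy)"
  define I3 where "I3 = ap \<bullet> (ykp - yy)"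
  define I4 where "I4 = ap \<bullet> (yk - ykp)"
  define S where "S = (vk - yk) \<bullet> (xp - xx)"
  define R where "R = (vk - yk) \<bullet> (xh - xp)"
  define X where "X = - (xh \<bullet> yy) + xx \<bullet> yk + vk \<bullet> (xh - xx) - Fk + Fy + P"
  have i: "I2 = I3 + I4" unfolding I2_def I3_def I4_def by (simp add: inner_diff_right)
  have e1: "X = I1 - lam * I2 + tau * Wkk + (tau + 1) * Wk - tau * Wp + R + S + P"
  proof -
    have "X = - (xh \<bullet> yy) + xx \<bullet> yk + vk \<bullet> (xh - xx) + (Fy - Fk) + P" unfolding X_def by simp
    also have "\<dots> = - (xh \<bullet> yy) + xx \<bullet> yk + vk \<bullet> (xh - xx) - (xt \<bullet> (yk - yy)) + tau * Wkk + (tau + 1) * Wk - tau * Wp + P"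
      unfolding h3 by simp
    finally show ?thesis unfolding I1_def I2_def R_def S_def hxt
      by (simp add: inner_simps algebra_simps inner_commute)
  qed
  have e2: "bk * X = bk * I1 - bk * lam * I2 + bk * tau * Wkk + bk * (tau + 1) * Wk - bk * tau * Wp + bk * R + bk * S + bk * P"
    unfolding e1 by (simp add: algebra_simps)
  have f1: "bk * P \<ge> bk * (pk / 2 * na\<^sup>2)" using hP bk by (simp add: mult_left_mono)
  have f2: "bk * R \<ge> bk * (- (D\<^sup>2 / pk) - pk / 4 * na\<^sup>2)" using hvy bk unfolding R_def by (simp add: mult_left_mono)
  have f3: "bk * lam * I2 = bp * I3 + bp * I4" using hb i unfolding I2_def[symmetric] by (simp add: algebra_simps)
  have g1: "bk * (pk / 2 * na\<^sup>2) = bk * pk / 4 * na\<^sup>2 + bk * pk / 4 * na\<^sup>2" by (simp add: field_simps)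
  have g2: "bk * (- (D\<^sup>2 / pk) - pk / 4 * na\<^sup>2) = - (bk * D\<^sup>2 / pk) - bk * pk / 4 * na\<^sup>2" by (simp add: field_simps)
  have "bk * X \<ge> (bk * I1 + bk * pk / 4 * na\<^sup>2 + bk * (tau + 1) * Wk) - (bp * I3 + bp * pp / 4 * nap\<^sup>2 + bp * (taup + 1) * Wp) + bk * S - bk * D\<^sup>2 / pk"
    using e2 f1 f2 f3 g1 g2 hcross hW unfolding I4_def[symmetric] by linarith
  then show ?thesis unfolding X_def I1_def I3_def S_def .
qed



lemma inner_prod_integrable:
  fixes u w :: "'w \<Rightarrow> 'a::euclidean_space"
  assumes iu: "integrable M (\<lambda>\<omega>. (norm (u \<omega>))\<^sup>2)" and iw: "integrable M (\<lambda>\<omega>. (norm (w \<omega>))\<^sup>2)"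
    and mu: "u \<in> borel_measurable M" and mw: "w \<in> borel_measurable M" and b: "b \<in> Basis"
  shows "integrable M (\<lambda>\<omega>. (u \<omega> \<bullet> b) * (w \<omega> \<bullet> b))"
proof (rule Bochner_Integration.integrable_bound[OF Bochner_Integration.integrable_add[OF iu iw]])
  show "(\<lambda>\<omega>. (u \<omega> \<bullet> b) * (w \<omega> \<bullet> b)) \<in> borel_measurable M" using mu mw by measurable
  show "AE \<omega> in M. norm ((u \<omega> \<bullet> b) * (w \<omega> \<bullet> b)) \<le> norm ((norm (u \<omega>))\<^sup>2 + (norm (w \<omega>))\<^sup>2)"
  proof (intro AE_I2)
    fix \<omega>
    have 1: "\<bar>u \<omega> \<bullet> b\<bar> \<le> norm (u \<omega>)" "\<bar>w \<omega> \<bullet> b\<bar> \<le> norm (w \<omega>)" using b by (auto simp: Basis_le_norm)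
    have "\<bar>(u \<omega> \<bullet> b) * (w \<omega> \<bullet> b)\<bar> \<le> norm (u \<omega>) * norm (w \<omega>)"
      unfolding abs_mult using 1 by (intro mult_mono) auto
    also have "\<dots> \<le> (norm (u \<omega>))\<^sup>2 + (norm (w \<omega>))\<^sup>2"
    proof -
      have e: "(norm (u \<omega>))\<^sup>2 + (norm (w \<omega>))\<^sup>2 - 2 * (norm (u \<omega>) * norm (w \<omega>)) = (norm (u \<omega>) - norm (w \<omega>))\<^sup>2"
        by (simp add: power2_eq_square algebra_simps)
      have "(norm (u \<omega>) - norm (w \<omega>))\<^sup>2 \<ge> 0" by simp
      moreover have "norm (u \<omega>) * norm (w \<omega>) \<ge> 0" by simp
      ultimately show ?thesis using e by linarith
    qed
    finally show "norm ((u \<omega> \<bullet> b) * (w \<omega> \<bullet> b)) \<le> norm ((norm (u \<omega>))\<^sup>2 + (norm (w \<omega>))\<^sup>2)" by simp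
  qed
qed

lemma sq_shift_integrable:
  fixes x :: "'w \<Rightarrow> 'a::euclidean_space"
  assumes fm: "finite_measure M" and ix: "integrable M (\<lambda>\<omega>. (norm (x \<omega>))\<^sup>2)" and mx: "x \<in> borel_measurable M"
  shows "integrable M (\<lambda>\<omega>. (norm (x \<omega> - c))\<^sup>2)"
proof -
  have ic: "integrable M (\<lambda>\<omega>. 2 * (norm c)\<^sup>2)" using finite_measure.integrable_const[OF fm] by blast
  have i2: "integrable M (\<lambda>\<omega>. 2 * (norm (x \<omega>))\<^sup>2)" using ix by simp
  show ?thesis
  proof (rule Bochner_Integration.integrable_bound[OF Bochner_Integration.integrable_add[OF i2 ic]])
    show "(\<lambda>\<omega>. (norm (x \<omega> - c))\<^sup>2) \<in> borel_measurable M" using mx by measurable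
    show "AE \<omega> in M. norm ((norm (x \<omega> - c))\<^sup>2) \<le> norm (2 * (norm (x \<omega>))\<^sup>2 + 2 * (norm c)\<^sup>2)"
    proof (intro AE_I2)
      fix \<omega>
      have "norm (x \<omega> - c) \<le> norm (x \<omega>) + norm c" by (rule norm_triangle_ineq4)
      then have "(norm (x \<omega> - c))\<^sup>2 \<le> (norm (x \<omega>) + norm c)\<^sup>2" by (intro power_mono) auto
      also have "\<dots> \<le> 2 * (norm (x \<omega>))\<^sup>2 + 2 * (norm c)\<^sup>2"
      proof -
        have e: "2 * (norm (x \<omega>))\<^sup>2 + 2 * (norm c)\<^sup>2 - (norm (x \<omega>) + norm c)\<^sup>2 = (norm (x \<omega>) - norm c)\<^sup>2"
          by (simp add: power2_eq_square algebra_simps)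
        have "(norm (x \<omega>) - norm c)\<^sup>2 \<ge> 0" by simp
        then show ?thesis using e by linarith
      qed
      finally show "norm ((norm (x \<omega> - c))\<^sup>2) \<le> norm (2 * (norm (x \<omega>))\<^sup>2 + 2 * (norm c)\<^sup>2)" by simp
    qed
  qed
qed

lemma cond_exp_swap:
  assumes sf: "sigma_finite_subalgebra M F" and i: "integrable M (\<lambda>\<omega>. X \<omega> * V \<omega>)"
    and mX: "X \<in> borel_measurable F" and mV: "V \<in> borel_measurable M" and mY: "Y \<in> borel_measurable M"
    and ae: "AE \<omega> in M. real_cond_exp M F V \<omega> = Y \<omega>"
  shows "(\<integral>\<omega>. X \<omega> * V \<omega> \<partial>M) = (\<integral>\<omega>. X \<omega> * Y \<omega> \<partial>M)"
proof -
  interpret sigma_finite_subalgebra M F by (rule sf)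
  have mXM: "X \<in> borel_measurable M" by (rule measurable_from_subalg[OF subalg mX])
  have "(\<integral>\<omega>. X \<omega> * V \<omega> \<partial>M) = (\<integral>\<omega>. X \<omega> * real_cond_exp M F V \<omega> \<partial>M)"
    using real_cond_exp_intg(2)[OF i mX mV] by simp
  also have "\<dots> = (\<integral>\<omega>. X \<omega> * Y \<omega> \<partial>M)"
    by (rule integral_cong_AE) (use mXM mY ae in auto)
  finally show ?thesis .
qed

lemma amgm:
  fixes D m p :: real
  assumes "p > 0"
  shows "D * m \<le> D\<^sup>2 / p + p / 4 * m\<^sup>2"
proof -
  have e: "D\<^sup>2 / p + p / 4 * m\<^sup>2 - D * m = (D - p / 2 * m)\<^sup>2 / p"
    using assms by (simp add: field_simps power2_eq_square)
  have "(D - p / 2 * m)\<^sup>2 / p \<ge> 0" using assms by simp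
  then show ?thesis using e by linarith
qed

lemma telescope:
  fixes G :: "nat \<Rightarrow> real"
  shows "(\<Sum>k=1..N. G k - G (k - 1)) = G N - G 0"
  by (induction N) (auto simp: sum.atLeast1_atMost_eq)



lemma gk_scale:
  fixes gk :: "'a::real_inner"
  assumes tau: "tau \<ge> 0" and gk: "gk = (1 / (1 + tau)) *\<^sub>R (xt + tau *\<^sub>R gp)"
  shows "(1 + tau) * (gk \<bullet> w) = (xt + tau *\<^sub>R gp) \<bullet> w"
proof -
  have "(1 + tau) * (gk \<bullet> w) = ((1 + tau) * (1 / (1 + tau))) * ((xt + tau *\<^sub>R gp) \<bullet> w)"
    unfolding gk by simp
  also have "(1 + tau) * (1 / (1 + tau)) = 1" using tau by simp
  finally show ?thesis by simp
qed

lemma argmin_subgrad: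
  fixes F :: "'a::real_inner \<Rightarrow> real"
  assumes am: "is_arg_min (\<lambda>u. - (xt \<bullet> u) + F u + tau * bregman F gp yp u) (\<lambda>u. u \<in> D) yk"
    and tau: "tau \<ge> 0" and gk: "gk = (1 / (1 + tau)) *\<^sub>R (xt + tau *\<^sub>R gp)"
  shows "yk \<in> D" "is_subgrad D F yk gk"
proof -
  show "yk \<in> D" using am unfolding is_arg_min_def by blast
  show "is_subgrad D F yk gk" unfolding is_subgrad_def
  proof
    fix u assume u: "u \<in> D"
    have "\<not> ((- (xt \<bullet> u) + F u + tau * bregman F gp yp u) < (- (xt \<bullet> yk) + F yk + tau * bregman F gp yp yk))"
      using am u unfolding is_arg_min_def by blast
    then have 1: "- (xt \<bullet> yk) + F yk + tau * bregman F gp yp yk \<le> - (xt \<bullet> u) + F u + tau * bregman F gp yp u"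
      by simp
    have 2: "(1 + tau) * (gk \<bullet> (u - yk)) = (xt + tau *\<^sub>R gp) \<bullet> (u - yk)" by (rule gk_scale[OF tau gk])
    have "(1 + tau) * (F u - F yk) \<ge> (xt + tau *\<^sub>R gp) \<bullet> (u - yk)"
      using 1 unfolding bregman_def by (simp add: inner_simps algebra_simps)
    then have "(1 + tau) * (F u - F yk) \<ge> (1 + tau) * (gk \<bullet> (u - yk))" using 2 by simp
    then have "F u - F yk \<ge> gk \<bullet> (u - yk)" using tau by simp
    then show "F yk + gk \<bullet> (u - yk) \<le> F u" by simp
  qed
qed

lemma three_point:
  fixes F :: "'a::real_inner \<Rightarrow> real"
  assumes tau: "tau \<ge> 0" and gk: "gk = (1 / (1 + tau)) *\<^sub>R (xt + tau *\<^sub>R gp)"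
  shows "F yy - F yk = - (xt \<bullet> (yk - yy)) + tau * bregman F gp yp yk + (tau + 1) * bregman F gk yk yy - tau * bregman F gp yp yy"
proof -
  have 2: "(1 + tau) * (gk \<bullet> (yy - yk)) = (xt + tau *\<^sub>R gp) \<bullet> (yy - yk)" by (rule gk_scale[OF tau gk])
  have "(tau + 1) * bregman F gk yk yy = (1 + tau) * (F yy - F yk) - (1 + tau) * (gk \<bullet> (yy - yk))"
    unfolding bregman_def by (simp add: algebra_simps)
  also have "\<dots> = (1 + tau) * (F yy - F yk) - (xt + tau *\<^sub>R gp) \<bullet> (yy - yk)" using 2 by simp
  finally have 3: "(tau + 1) * bregman F gk yk yy = (1 + tau) * (F yy - F yk) - (xt + tau *\<^sub>R gp) \<bullet> (yy - yk)" .
  show ?thesis unfolding 3 unfolding bregman_def by (simp add: inner_simps algebra_simps)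
qed



theorem lemma5p3:
  fixes M :: "'w measure" and F :: "nat \<Rightarrow> 'w measure"
    and Xs :: "'a::euclidean_space set" and nrm :: "'a \<Rightarrow> real"
    and Zs :: "'b::euclidean_space set" and nrmZ :: "'b \<Rightarrow> real"
    and Alin :: "'a \<Rightarrow> 'b" and h :: "'b \<Rightarrow> real" and mu :: real
    and nu :: "'a \<Rightarrow> real" and nu' :: "'a \<Rightarrow> 'a"
    and f :: "'a \<Rightarrow> real" and gf :: "'a \<Rightarrow> 'a" and Lt :: real
    and zeta :: "'b \<Rightarrow> real" and zeta' :: "'b \<Rightarrow> 'b"
    and x0 y0 g0 :: 'a and z0 :: 'b
    and T :: "nat \<Rightarrow> nat" and beta p lam tau sigma :: "nat \<Rightarrow> real"
    and q eta alpha :: "nat \<Rightarrow> nat \<Rightarrow> real" and N :: nat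
    and x xh y g v :: "nat \<Rightarrow> 'w \<Rightarrow> 'a" and z :: "nat \<Rightarrow> 'w \<Rightarrow> 'b"
    and xin :: "nat \<Rightarrow> nat \<Rightarrow> 'w \<Rightarrow> 'a" and zin :: "nat \<Rightarrow> nat \<Rightarrow> 'w \<Rightarrow> 'b"
    and xx yy :: 'a
  assumes \<comment> \<open>spaces, norms and functions\<close>
    "closed Xs" "convex Xs" "Xs \<noteq> {}" "is_norm nrm"
    "closed Zs" "convex Zs" "is_norm nrmZ"
    "linear Alin" "convex_on Zs h" "mu \<ge> 0"
    "strongly_convex_wrt Xs nrm 1 nu" "\<forall>a\<in>Xs. is_subgrad Xs nu a (nu' a)"
    "convex_on UNIV f" "\<forall>a. (f has_derivative (\<lambda>d. gf a \<bullet> d)) (at a)"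
    "\<forall>a b. dual_norm nrm (gf a - gf b) \<le> Lt * nrm (a - b)"
    "strongly_convex_wrt Zs nrmZ 1 zeta" "\<forall>a\<in>Zs. is_subgrad Zs zeta a (zeta' a)"
  and \<comment> \<open>parameters\<close>
    "\<forall>k. T k > 0" "\<forall>k. beta k > 0" "\<forall>k. p k > 0"
    "\<forall>k t. q k t > 0" "\<forall>k t. eta k t > 0"
    "\<forall>k. lam k \<ge> 0" "\<forall>k. tau k \<ge> 0" "\<forall>k t. alpha k t \<ge> 0"
    "N \<ge> 1"
    "tau 1 = 0"
    "\<forall>k\<ge>2. beta k * tau k \<le> beta (k - 1) * (tau (k - 1) + 1)"
    "\<forall>k\<ge>2. beta (k - 1) = beta k * lam k"
    "\<forall>k\<ge>2. 2 * Lt * lam k \<le> p (k - 1) * tau k"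
  and \<comment> \<open>initialisation (deterministic); g k \<omega> plays the role of (f~*)'(y_k)\<close>
    "x0 \<in> Xs" "y0 \<in> conj_dom f" "z0 \<in> Zs"
    "is_subgrad (conj_dom f) (conj_fun f) y0 g0"
    "\<forall>\<omega>\<in>space M. x 0 \<omega> = x0 \<and> xh 0 \<omega> = x0 \<and> y 0 \<omega> = y0 \<and> z 0 \<omega> = z0 \<and> g 0 \<omega> = g0"
  and \<comment> \<open>outer iteration: dual step\<close>
    "\<forall>k\<in>{1..N}. \<forall>\<omega>\<in>space M.
       (let xt = x (k - 1) \<omega> + lam k *\<^sub>R (xh (k - 1) \<omega> - (if k = 1 then x0 else x (k - 2) \<omega>)) in
        is_arg_min (\<lambda>u. - (xt \<bullet> u) + conj_fun f u
                         + tau k * bregman (conj_fun f) (g (k - 1) \<omega>) (y (k - 1) \<omega>) u)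
                   (\<lambda>u. u \<in> conj_dom f) (y k \<omega>)
        \<and> g k \<omega> = (1 / (1 + tau k)) *\<^sub>R (xt + tau k *\<^sub>R g (k - 1) \<omega>))"
  and \<comment> \<open>inner iterations\<close>
    "\<forall>k\<in>{1..N}. \<forall>\<omega>\<in>space M. xin k 0 \<omega> = x (k - 1) \<omega> \<and> zin k 0 \<omega> = z (k - 1) \<omega>"
    "\<forall>k\<in>{1..N}. \<forall>t\<in>{1..T k}. \<forall>\<omega>\<in>space M.
       (let xm1 = (if k = 1 then x0 else xin (k - 1) (T (k - 1) - 1) \<omega>);
            xm2 = (if t = 1 then xm1 else xin k (t - 2) \<omega>);
            ut = xin k (t - 1) \<omega> + alpha k t *\<^sub>R (xin k (t - 1) \<omega> - xm2) in
        is_arg_min (\<lambda>w. h w - (Alin ut \<bullet> w) + q k t * bregman zeta (zeta' (zin k (t - 1) \<omega>)) (zin k (t - 1) \<omega>) w)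
                   (\<lambda>w. w \<in> Zs) (zin k t \<omega>)
        \<and> is_arg_min (\<lambda>u. mu * nu u + (v k \<omega> + adjoint Alin (zin k t \<omega>)) \<bullet> u
                         + eta k t * bregman nu (nu' (xin k (t - 1) \<omega>)) (xin k (t - 1) \<omega>) u
                         + p k * bregman nu (nu' (x (k - 1) \<omega>)) (x (k - 1) \<omega>) u)
                   (\<lambda>u. u \<in> Xs) (xin k t \<omega>))"
    "\<forall>k\<in>{1..N}. \<forall>\<omega>\<in>space M. x k \<omega> = xin k (T k) \<omega> \<and> z k \<omega> = zin k (T k) \<omega>
        \<and> xh k \<omega> = (1 / real (T k)) *\<^sub>R (\<Sum>t=1..T k. xin k t \<omega>)"
  and \<comment> \<open>probabilistic structure\<close>
    "prob_space M"
    "\<forall>k. x k \<in> borel_measurable M \<and> xh k \<in> borel_measurable M \<and> y k \<in> borel_measurable M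
        \<and> g k \<in> borel_measurable M \<and> v k \<in> borel_measurable M \<and> z k \<in> borel_measurable M"
    "\<forall>k t. xin k t \<in> borel_measurable M \<and> zin k t \<in> borel_measurable M"
    \<comment> \<open>F k = information available before iteration k (filtration)\<close>
    "\<forall>k. subalgebra M (F k)" "\<forall>k j. j \<le> k \<longrightarrow> subalgebra (F k) (F j)"
    "\<forall>k\<ge>1. (\<forall>j<k. v j \<in> borel_measurable (F k)) \<and> y k \<in> borel_measurable (F k)
         \<and> x (k - 1) \<in> borel_measurable (F k) \<and> xh (k - 1) \<in> borel_measurable (F k)"
    \<comment> \<open>conditional unbiasedness and conditional variance bound\<close>
    "\<forall>k\<in>{1..N}. integrable M (v k) \<and> integrable M (\<lambda>\<omega>. (dual_norm nrm (v k \<omega> - y k \<omega>))\<^sup>2)"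
    "\<forall>k\<in>{1..N}. \<forall>b\<in>Basis. AE \<omega> in M. real_cond_exp M (F k) (\<lambda>\<omega>. v k \<omega> \<bullet> b) \<omega> = y k \<omega> \<bullet> b"
    "\<forall>k\<in>{1..N}. AE \<omega> in M. real_cond_exp M (F k) (\<lambda>\<omega>. (dual_norm nrm (v k \<omega> - y k \<omega>))\<^sup>2) \<omega> \<le> (sigma k)\<^sup>2"
    \<comment> \<open>finite second moments / existence of the expectations involved\<close>
    "\<forall>k\<in>{1..N}. integrable M (\<lambda>\<omega>. (norm (x (k - 1) \<omega>))\<^sup>2) \<and> integrable M (\<lambda>\<omega>. (norm (xh k \<omega>))\<^sup>2)
        \<and> integrable M (\<lambda>\<omega>. (norm (y k \<omega>))\<^sup>2) \<and> integrable M (\<lambda>\<omega>. (norm (v k \<omega>))\<^sup>2)"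
    "integrable M (\<lambda>\<omega>. \<Sum>k=1..N. beta k * (- (xh k \<omega> \<bullet> yy) + xx \<bullet> y k \<omega> + v k \<omega> \<bullet> (xh k \<omega> - xx)
         - conj_fun f (y k \<omega>) + conj_fun f yy
         + p k / real (T k) * (\<Sum>t=1..T k. bregman nu (nu' (x (k - 1) \<omega>)) (x (k - 1) \<omega>) (xin k t \<omega>))))"
    "integrable M (\<lambda>\<omega>. - beta N * ((x (N - 1) \<omega> - xh N \<omega>) \<bullet> (y N \<omega> - yy))
         + beta N * p N / 4 * (nrm (x (N - 1) \<omega> - xh N \<omega>))\<^sup>2
         - (\<Sum>k=1..N. beta k * (sigma k)\<^sup>2 / p k)
         + beta N * (tau N + 1) * bregman (conj_fun f) (g N \<omega>) (y N \<omega>) yy)"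
  and \<comment> \<open>the fixed comparison point\<close>
    "xx \<in> Xs" "yy \<in> conj_dom f"
  shows "(\<integral>\<omega>. (\<Sum>k=1..N. beta k * (- (xh k \<omega> \<bullet> yy) + xx \<bullet> y k \<omega> + v k \<omega> \<bullet> (xh k \<omega> - xx)
         - conj_fun f (y k \<omega>) + conj_fun f yy
         + p k / real (T k) * (\<Sum>t=1..T k. bregman nu (nu' (x (k - 1) \<omega>)) (x (k - 1) \<omega>) (xin k t \<omega>)))) \<partial>M)
     \<ge> (\<integral>\<omega>. (- beta N * ((x (N - 1) \<omega> - xh N \<omega>) \<bullet> (y N \<omega> - yy))
         + beta N * p N / 4 * (nrm (x (N - 1) \<omega> - xh N \<omega>))\<^sup>2
         - (\<Sum>k=1..N. beta k * (sigma k)\<^sup>2 / p k)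
         + beta N * (tau N + 1) * bregman (conj_fun f) (g N \<omega>) (y N \<omega>) yy) \<partial>M)"
proof -
  note n = assms(4) and cv = assms(13) and d = assms(14) and Lip = assms(15)
  have L0: "Lt \<ge> 0" by (rule L_nonneg[OF n cv d Lip])
  have Tpos: "\<And>k. T k > 0" and bpos: "\<And>k. beta k > 0" and ppos: "\<And>k. p k > 0"
    and tpos: "\<And>k. tau k \<ge> 0" and lpos: "\<And>k. lam k \<ge> 0"
    using assms(18,19,20,23,24) by auto
  have fm: "finite_measure M" using assms(40) unfolding prob_space_def by simp
  have sf: "sigma_finite_subalgebra M (F k)" for k
    by (intro finite_measure_subalgebra_is_sigma_finite)
      (simp add: finite_measure_subalgebra_def finite_measure_subalgebra_axioms_def fm assms(43))
  have init: "x 0 \<omega> = x0" "xh 0 \<omega> = x0" "y 0 \<omega> = y0" "g 0 \<omega> = g0" if "\<omega> \<in> space M" for \<omega>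
    using assms(35) that by auto
  have dstep: "is_arg_min (\<lambda>u. - ((x (k - 1) \<omega> + lam k *\<^sub>R (xh (k - 1) \<omega> - (if k = 1 then x0 else x (k - 2) \<omega>))) \<bullet> u) + conj_fun f u
                         + tau k * bregman (conj_fun f) (g (k - 1) \<omega>) (y (k - 1) \<omega>) u)
                   (\<lambda>u. u \<in> conj_dom f) (y k \<omega>)"
    "g k \<omega> = (1 / (1 + tau k)) *\<^sub>R ((x (k - 1) \<omega> + lam k *\<^sub>R (xh (k - 1) \<omega> - (if k = 1 then x0 else x (k - 2) \<omega>))) + tau k *\<^sub>R g (k - 1) \<omega>)"
    if "k \<in> {1..N}" "\<omega> \<in> space M" for k \<omega>
    using assms(36) that unfolding Let_def by auto
  have dual: "y k \<omega> \<in> conj_dom f \<and> is_subgrad (conj_dom f) (conj_fun f) (y k \<omega>) (g k \<omega>)"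
    if "k \<le> N" "\<omega> \<in> space M" for k \<omega>
  proof (cases "k = 0")
    case True then show ?thesis using assms(32,34) init[OF that(2)] by simp
  next
    case False
    then have k: "k \<in> {1..N}" using that by auto
    show ?thesis using argmin_subgrad[OF dstep(1)[OF k that(2)] tpos dstep(2)[OF k that(2)]] by blast
  qed
  have xin_in: "xin k t \<omega> \<in> Xs" if "k \<in> {1..N}" "t \<in> {1..T k}" "\<omega> \<in> space M" for k t \<omega>
    using assms(38)[rule_format, OF that] unfolding Let_def is_arg_min_def by blast
  have xfin: "x k \<omega> = xin k (T k) \<omega>" "xh k \<omega> = (1 / real (T k)) *\<^sub>R (\<Sum>t=1..T k. xin k t \<omega>)"
    if "k \<in> {1..N}" "\<omega> \<in> space M" for k \<omega>
    using assms(39) that by auto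
  have xprev_in: "x (k - 1) \<omega> \<in> Xs" if "k \<in> {1..N}" "\<omega> \<in> space M" for k \<omega>
  proof (cases "k = 1")
    case True then show ?thesis using init[OF that(2)] assms(31) by simp
  next
    case False
    then have k1: "k - 1 \<in> {1..N}" using that by auto
    have "T (k - 1) \<in> {1..T (k - 1)}" using Tpos[of "k - 1"] by auto
    then show ?thesis using xfin(1)[OF k1 that(2)] xin_in[OF k1 _ that(2)] by simp
  qed
  define D where "D = (\<lambda>k \<omega>. dual_norm nrm (v k \<omega> - y k \<omega>))"
  define S where "S = (\<lambda>k \<omega>. (v k \<omega> - y k \<omega>) \<bullet> (x (k - 1) \<omega> - xx))"
  define G where "G = (\<lambda>j \<omega>. if j = 0 then 0 else beta j * ((xh j \<omega> - x (j - 1) \<omega>) \<bullet> (y j \<omega> - yy))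
      + beta j * p j / 4 * (nrm (xh j \<omega> - x (j - 1) \<omega>))\<^sup>2 + beta j * (tau j + 1) * bregman (conj_fun f) (g j \<omega>) (y j \<omega>) yy)"
  define Abr where "Abr = (\<lambda>k \<omega>. - (xh k \<omega> \<bullet> yy) + xx \<bullet> y k \<omega> + v k \<omega> \<bullet> (xh k \<omega> - xx)
         - conj_fun f (y k \<omega>) + conj_fun f yy
         + p k / real (T k) * (\<Sum>t=1..T k. bregman nu (nu' (x (k - 1) \<omega>)) (x (k - 1) \<omega>) (xin k t \<omega>)))"
  have perk: "beta k * Abr k \<omega> \<ge> G k \<omega> - G (k - 1) \<omega> + (beta k * S k \<omega> - beta k / p k * (D k \<omega>)\<^sup>2)"
    if k: "k \<in> {1..N}" and w: "\<omega> \<in> space M" for k \<omega>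
  proof -
    define ap where "ap = xh (k - 1) \<omega> - (if k = 1 then x0 else x (k - 2) \<omega>)"
    define xt where "xt = x (k - 1) \<omega> + lam k *\<^sub>R ap"
    define na where "na = nrm (xh k \<omega> - x (k - 1) \<omega>)"
    define Wkk where "Wkk = bregman (conj_fun f) (g (k - 1) \<omega>) (y (k - 1) \<omega>) (y k \<omega>)"
    define Wp where "Wp = bregman (conj_fun f) (g (k - 1) \<omega>) (y (k - 1) \<omega>) yy"
    define Wk where "Wk = bregman (conj_fun f) (g k \<omega>) (y k \<omega>) yy"
    define P where "P = p k / real (T k) * (\<Sum>t=1..T k. bregman nu (nu' (x (k - 1) \<omega>)) (x (k - 1) \<omega>) (xin k t \<omega>))"
    have gk: "g k \<omega> = (1 / (1 + tau k)) *\<^sub>R (xt + tau k *\<^sub>R g (k - 1) \<omega>)"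
      using dstep(2)[OF k w] unfolding xt_def ap_def by simp
    have h3: "conj_fun f yy - conj_fun f (y k \<omega>) = - (xt \<bullet> (y k \<omega> - yy)) + tau k * Wkk + (tau k + 1) * Wk - tau k * Wp"
      unfolding Wkk_def Wk_def Wp_def by (rule three_point[OF tpos gk])
    have hP: "P \<ge> p k / 2 * na\<^sup>2"
    proof -
      have xp: "x (k - 1) \<omega> \<in> Xs" by (rule xprev_in[OF k w])
      have V: "bregman nu (nu' (x (k - 1) \<omega>)) (x (k - 1) \<omega>) (xin k t \<omega>) \<ge> 1 / 2 * (nrm (xin k t \<omega> - x (k - 1) \<omega>))\<^sup>2"
        if t: "t \<in> {1..T k}" for t
        using V_bound[OF assms(11) xp xin_in[OF k t w]] assms(12) xp by blast
      have s1: "(\<Sum>t=1..T k. bregman nu (nu' (x (k - 1) \<omega>)) (x (k - 1) \<omega>) (xin k t \<omega>))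
          \<ge> 1 / 2 * (\<Sum>t=1..T k. (nrm (xin k t \<omega> - x (k - 1) \<omega>))\<^sup>2)"
        unfolding sum_distrib_left by (rule sum_mono) (use V in auto)
      have j: "na\<^sup>2 \<le> (1 / real (T k)) * (\<Sum>t=1..T k. (nrm (xin k t \<omega> - x (k - 1) \<omega>))\<^sup>2)"
        unfolding na_def xfin(2)[OF k w] by (rule jensen_nrm[OF n Tpos])
      have "P \<ge> p k / real (T k) * (1 / 2 * (\<Sum>t=1..T k. (nrm (xin k t \<omega> - x (k - 1) \<omega>))\<^sup>2))"
        unfolding P_def using s1 ppos[of k] Tpos[of k] by (intro mult_left_mono) auto
      moreover have "p k / real (T k) * (1 / 2 * (\<Sum>t=1..T k. (nrm (xin k t \<omega> - x (k - 1) \<omega>))\<^sup>2))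
          = p k / 2 * ((1 / real (T k)) * (\<Sum>t=1..T k. (nrm (xin k t \<omega> - x (k - 1) \<omega>))\<^sup>2))" by simp
      moreover have "p k / 2 * na\<^sup>2 \<le> p k / 2 * ((1 / real (T k)) * (\<Sum>t=1..T k. (nrm (xin k t \<omega> - x (k - 1) \<omega>))\<^sup>2))"
        using j ppos[of k] by (intro mult_left_mono) auto
      ultimately show ?thesis by linarith
    qed
    have hvy: "(v k \<omega> - y k \<omega>) \<bullet> (xh k \<omega> - x (k - 1) \<omega>) \<ge> - ((D k \<omega>)\<^sup>2 / p k) - p k / 4 * na\<^sup>2"
    proof -
      have "(v k \<omega> - y k \<omega>) \<bullet> (- (xh k \<omega> - x (k - 1) \<omega>)) \<le> D k \<omega> * nrm (- (xh k \<omega> - x (k - 1) \<omega>))"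
        unfolding D_def by (rule dual_norm_props(1)[OF n])
      then have "- ((v k \<omega> - y k \<omega>) \<bullet> (xh k \<omega> - x (k - 1) \<omega>)) \<le> D k \<omega> * na"
        unfolding na_def nrm_basic(2)[OF n] by (simp add: inner_diff_right)
      moreover have "D k \<omega> * na \<le> (D k \<omega>)\<^sup>2 / p k + p k / 4 * na\<^sup>2" by (rule amgm[OF ppos])
      ultimately show ?thesis by linarith
    qed
    have dk: "y k \<omega> \<in> conj_dom f" "is_subgrad (conj_dom f) (conj_fun f) (y k \<omega>) (g k \<omega>)"
      using dual[of k \<omega>] k w by auto
    have dp: "y (k - 1) \<omega> \<in> conj_dom f" "is_subgrad (conj_dom f) (conj_fun f) (y (k - 1) \<omega>) (g (k - 1) \<omega>)"
      using dual[of "k - 1" \<omega>] k w by auto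
    have Wp0: "Wp \<ge> 0" using dp(2) assms(53) unfolding Wp_def is_subgrad_def bregman_def by auto
    show ?thesis
    proof (cases "k = 1")
      case True
      have ap0: "ap = 0" unfolding ap_def using True init[OF w] by simp
      have t1: "tau k = 0" using True assms(27) by simp
      have "beta k * (- (xh k \<omega> \<bullet> yy) + xx \<bullet> y k \<omega> + v k \<omega> \<bullet> (xh k \<omega> - xx) - conj_fun f (y k \<omega>) + conj_fun f yy + P) \<ge>
          (beta k * ((xh k \<omega> - x (k - 1) \<omega>) \<bullet> (y k \<omega> - yy)) + beta k * p k / 4 * na\<^sup>2 + beta k * (tau k + 1) * Wk)
          - (0 * (ap \<bullet> (y (k - 1) \<omega> - yy)) + 0 * 0 / 4 * 0\<^sup>2 + 0 * (0 + 1) * Wp)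
          + beta k * ((v k \<omega> - y k \<omega>) \<bullet> (x (k - 1) \<omega> - xx)) - beta k * (D k \<omega>)\<^sup>2 / p k"
        by (rule step_k[OF bpos ppos h3 xt_def hP hvy]) (simp_all add: ap0 t1)
      then show ?thesis unfolding Abr_def G_def S_def P_def[symmetric] na_def[symmetric] Wk_def[symmetric]
        using True by simp
    next
      case False
      then have k2: "k \<ge> 2" using k by auto
      have apk: "ap = xh (k - 1) \<omega> - x (k - 2) \<omega>" unfolding ap_def using False by simp
      have hb: "beta k * lam k * (ap \<bullet> (y k \<omega> - yy)) = beta (k - 1) * (ap \<bullet> (y k \<omega> - yy))"
        using assms(29) k2 by simp
      have hW: "beta k * tau k * Wp \<le> beta (k - 1) * (tau (k - 1) + 1) * Wp"
        using assms(28) k2 Wp0 by (intro mult_right_mono) auto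
      have hcross: "beta (k - 1) * (ap \<bullet> (y k \<omega> - y (k - 1) \<omega>)) \<le> beta (k - 1) * p (k - 1) / 4 * (nrm ap)\<^sup>2 + beta k * tau k * Wkk"
      proof -
        have cond: "2 * Lt * beta (k - 1) \<le> p (k - 1) * (beta k * tau k)"
        proof -
          have "2 * Lt * lam k \<le> p (k - 1) * tau k" using assms(30) k2 by simp
          then have "beta k * (2 * Lt * lam k) \<le> beta k * (p (k - 1) * tau k)" using bpos[of k] by (intro mult_left_mono) auto
          then show ?thesis using assms(29) k2 by (simp add: algebra_simps)
        qed
        have W: "\<forall>s. Wkk \<ge> s * (ap \<bullet> (y k \<omega> - y (k - 1) \<omega>)) - Lt / 2 * s\<^sup>2 * (nrm ap)\<^sup>2"
        proof
          fix s :: real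
          have "Wkk \<ge> (y k \<omega> - y (k - 1) \<omega>) \<bullet> (s *\<^sub>R ap) - Lt / 2 * (nrm (s *\<^sub>R ap))\<^sup>2"
            unfolding Wkk_def by (rule W_bound[OF n cv d Lip dp(1) dk(1) dp(2)])
          moreover have "(nrm (s *\<^sub>R ap))\<^sup>2 = s\<^sup>2 * (nrm ap)\<^sup>2"
            unfolding nrm_basic(5)[OF n] by (simp add: power_mult_distrib)
          ultimately show "Wkk \<ge> s * (ap \<bullet> (y k \<omega> - y (k - 1) \<omega>)) - Lt / 2 * s\<^sup>2 * (nrm ap)\<^sup>2"
            by (simp add: inner_commute)
        qed
        have "beta (k - 1) * (ap \<bullet> (y k \<omega> - y (k - 1) \<omega>)) \<le> beta (k - 1) * p (k - 1) / 4 * (nrm ap)\<^sup>2 + (beta k * tau k) * Wkk"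
          by (rule cross_term[OF _ bpos ppos L0 cond W]) (use bpos[of k] tpos[of k] in simp)
        then show ?thesis by simp
      qed
      have "beta k * (- (xh k \<omega> \<bullet> yy) + xx \<bullet> y k \<omega> + v k \<omega> \<bullet> (xh k \<omega> - xx) - conj_fun f (y k \<omega>) + conj_fun f yy + P) \<ge>
          (beta k * ((xh k \<omega> - x (k - 1) \<omega>) \<bullet> (y k \<omega> - yy)) + beta k * p k / 4 * na\<^sup>2 + beta k * (tau k + 1) * Wk)
          - (beta (k - 1) * (ap \<bullet> (y (k - 1) \<omega> - yy)) + beta (k - 1) * p (k - 1) / 4 * (nrm ap)\<^sup>2 + beta (k - 1) * (tau (k - 1) + 1) * Wp)
          + beta k * ((v k \<omega> - y k \<omega>) \<bullet> (x (k - 1) \<omega> - xx)) - beta k * (D k \<omega>)\<^sup>2 / p k"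
        by (rule step_k[OF bpos ppos h3 xt_def hP hvy hcross hW hb])
      moreover have "k - 1 - 1 = k - 2" by simp
      ultimately show ?thesis unfolding Abr_def G_def S_def P_def[symmetric] na_def[symmetric] Wk_def[symmetric] Wp_def[symmetric]
        using False apk k2 by simp
    qed
  qed
  define Q where "Q = (\<lambda>\<omega>. \<Sum>k=1..N. beta k * S k \<omega> - beta k / p k * (D k \<omega>)\<^sup>2)"
  define c where "c = (\<Sum>k=1..N. beta k * (sigma k)\<^sup>2 / p k)"
  define LHS where "LHS = (\<lambda>\<omega>. \<Sum>k=1..N. beta k * (- (xh k \<omega> \<bullet> yy) + xx \<bullet> y k \<omega> + v k \<omega> \<bullet> (xh k \<omega> - xx)
         - conj_fun f (y k \<omega>) + conj_fun f yy
         + p k / real (T k) * (\<Sum>t=1..T k. bregman nu (nu' (x (k - 1) \<omega>)) (x (k - 1) \<omega>) (xin k t \<omega>))))"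
  define R where "R = (\<lambda>\<omega>. - beta N * ((x (N - 1) \<omega> - xh N \<omega>) \<bullet> (y N \<omega> - yy))
         + beta N * p N / 4 * (nrm (x (N - 1) \<omega> - xh N \<omega>))\<^sup>2
         - (\<Sum>k=1..N. beta k * (sigma k)\<^sup>2 / p k)
         + beta N * (tau N + 1) * bregman (conj_fun f) (g N \<omega>) (y N \<omega>) yy)"
  have pw: "LHS \<omega> \<ge> R \<omega> + c + Q \<omega>" if w: "\<omega> \<in> space M" for \<omega>
  proof -
    have "LHS \<omega> = (\<Sum>k=1..N. beta k * Abr k \<omega>)" unfolding LHS_def Abr_def ..
    also have "\<dots> \<ge> (\<Sum>k=1..N. (G k \<omega> - G (k - 1) \<omega>) + (beta k * S k \<omega> - beta k / p k * (D k \<omega>)\<^sup>2))"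
      by (rule sum_mono) (use perk w in auto)
    finally have 1: "LHS \<omega> \<ge> (G N \<omega> - G 0 \<omega>) + Q \<omega>"
      unfolding sum.distrib telescope[of "\<lambda>k. G k \<omega>"] Q_def .
    have "G N \<omega> = R \<omega> + c"
    proof -
      have "nrm (xh N \<omega> - x (N - 1) \<omega>) = nrm (x (N - 1) \<omega> - xh N \<omega>)" by (rule nrm_basic(4)[OF n])
      moreover have "(xh N \<omega> - x (N - 1) \<omega>) \<bullet> (y N \<omega> - yy) = - ((x (N - 1) \<omega> - xh N \<omega>) \<bullet> (y N \<omega> - yy))"
        by (simp add: inner_diff_left)
      ultimately show ?thesis unfolding G_def R_def c_def using assms(26) by simp
    qed
    moreover have "G 0 \<omega> = 0" unfolding G_def by simp
    ultimately show ?thesis using 1 by simp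
  qed
  have mS: "\<And>k. x k \<in> borel_measurable M" "\<And>k. y k \<in> borel_measurable M" "\<And>k. v k \<in> borel_measurable M"
    using assms(41) by auto
  have Sint: "integrable M (S k) \<and> (\<integral>\<omega>. S k \<omega> \<partial>M) = 0" if k: "k \<in> {1..N}" for k
  proof -
    define X where "X = (\<lambda>\<omega>. x (k - 1) \<omega> - xx)"
    have mX: "X \<in> borel_measurable M" unfolding X_def using mS(1)[of "k - 1"] by measurable
    have mXF: "x (k - 1) \<in> borel_measurable (F k)" using assms(45) k by auto
    have iX: "integrable M (\<lambda>\<omega>. (norm (X \<omega>))\<^sup>2)" unfolding X_def
      by (rule sq_shift_integrable[OF fm]) (use assms(49) k mS in auto)
    have iv: "integrable M (\<lambda>\<omega>. (norm (v k \<omega>))\<^sup>2)" "integrable M (\<lambda>\<omega>. (norm (y k \<omega>))\<^sup>2)"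
      using assms(49) k by auto
    have Se: "S k = (\<lambda>\<omega>. \<Sum>b\<in>Basis. (X \<omega> \<bullet> b) * (v k \<omega> \<bullet> b) - (X \<omega> \<bullet> b) * (y k \<omega> \<bullet> b))"
    proof
      fix \<omega>
      have "S k \<omega> = (\<Sum>b\<in>Basis. ((v k \<omega> - y k \<omega>) \<bullet> b) * (X \<omega> \<bullet> b))"
        unfolding S_def X_def by (rule euclidean_inner)
      also have "\<dots> = (\<Sum>b\<in>Basis. (X \<omega> \<bullet> b) * (v k \<omega> \<bullet> b) - (X \<omega> \<bullet> b) * (y k \<omega> \<bullet> b))"
        by (rule sum.cong) (simp_all add: inner_diff_left algebra_simps)
      finally show "S k \<omega> = (\<Sum>b\<in>Basis. (X \<omega> \<bullet> b) * (v k \<omega> \<bullet> b) - (X \<omega> \<bullet> b) * (y k \<omega> \<bullet> b))" .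
    qed
    have i1: "integrable M (\<lambda>\<omega>. (X \<omega> \<bullet> b) * (v k \<omega> \<bullet> b))" if b: "b \<in> Basis" for b
      by (rule inner_prod_integrable[OF iX iv(1) mX mS(3) b])
    have i2: "integrable M (\<lambda>\<omega>. (X \<omega> \<bullet> b) * (y k \<omega> \<bullet> b))" if b: "b \<in> Basis" for b
      by (rule inner_prod_integrable[OF iX iv(2) mX mS(2) b])
    have z: "(\<integral>\<omega>. (X \<omega> \<bullet> b) * (v k \<omega> \<bullet> b) \<partial>M) = (\<integral>\<omega>. (X \<omega> \<bullet> b) * (y k \<omega> \<bullet> b) \<partial>M)" if b: "b \<in> Basis" for b
    proof (rule cond_exp_swap[OF sf i1[OF b]])
      show "(\<lambda>\<omega>. X \<omega> \<bullet> b) \<in> borel_measurable (F k)" unfolding X_def using mXF by measurable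
      show "(\<lambda>\<omega>. v k \<omega> \<bullet> b) \<in> borel_measurable M" using mS(3) by measurable
      show "(\<lambda>\<omega>. y k \<omega> \<bullet> b) \<in> borel_measurable M" using mS(2) by measurable
      show "AE \<omega> in M. real_cond_exp M (F k) (\<lambda>\<omega>. v k \<omega> \<bullet> b) \<omega> = y k \<omega> \<bullet> b"
        using assms(47) k b by auto
    qed
    have "integrable M (S k)" unfolding Se using i1 i2 by auto
    moreover have "(\<integral>\<omega>. S k \<omega> \<partial>M) = 0" unfolding Se
      using i1 i2 z by (simp add: integral_sum Bochner_Integration.integrable_diff)
    ultimately show ?thesis by simp
  qed
  have Dint: "integrable M (\<lambda>\<omega>. (D k \<omega>)\<^sup>2) \<and> (\<integral>\<omega>. (D k \<omega>)\<^sup>2 \<partial>M) \<le> (sigma k)\<^sup>2" if k: "k \<in> {1..N}" for k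
  proof -
    interpret sfs: sigma_finite_subalgebra M "F k" by (rule sf)
    have i: "integrable M (\<lambda>\<omega>. (D k \<omega>)\<^sup>2)" unfolding D_def using assms(46) k by auto
    have "(\<integral>\<omega>. (D k \<omega>)\<^sup>2 \<partial>M) = (\<integral>\<omega>. real_cond_exp M (F k) (\<lambda>\<omega>. (D k \<omega>)\<^sup>2) \<omega> \<partial>M)"
      using sfs.real_cond_exp_int(2)[OF i] by simp
    also have "\<dots> \<le> (sigma k)\<^sup>2"
      by (rule prob_space.integral_le_const[OF assms(40) sfs.real_cond_exp_int(1)[OF i]])
        (use assms(48) k in \<open>auto simp: D_def\<close>)
    finally show ?thesis using i by simp
  qed
  have iQ: "integrable M Q" unfolding Q_def using Sint Dint by auto
  have iL: "integrable M LHS" unfolding LHS_def using assms(50) .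
  have iR: "integrable M R" unfolding R_def using assms(51) .
  have ic: "integrable M (\<lambda>\<omega>. c)" using finite_measure.integrable_const[OF fm] .
  have "(\<integral>\<omega>. LHS \<omega> \<partial>M) \<ge> (\<integral>\<omega>. R \<omega> + c + Q \<omega> \<partial>M)"
    by (rule integral_mono[OF _ iL pw]) (use iR ic iQ in auto)
  moreover have "(\<integral>\<omega>. R \<omega> + c + Q \<omega> \<partial>M) = (\<integral>\<omega>. R \<omega> \<partial>M) + c + (\<integral>\<omega>. Q \<omega> \<partial>M)"
    using iR ic iQ prob_space.prob_space[OF assms(40)] by simp
  moreover have "(\<integral>\<omega>. Q \<omega> \<partial>M) \<ge> - c"
  proof -
    have "(\<integral>\<omega>. Q \<omega> \<partial>M) = (\<Sum>k=1..N. beta k * (\<integral>\<omega>. S k \<omega> \<partial>M) - beta k / p k * (\<integral>\<omega>. (D k \<omega>)\<^sup>2 \<partial>M))"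
      unfolding Q_def using Sint Dint by (simp add: integral_sum)
    also have "\<dots> \<ge> (\<Sum>k=1..N. - (beta k * (sigma k)\<^sup>2 / p k))"
    proof (rule sum_mono)
      fix k assume k: "k \<in> {1..N}"
      have "beta k / p k * (\<integral>\<omega>. (D k \<omega>)\<^sup>2 \<partial>M) \<le> beta k / p k * (sigma k)\<^sup>2"
        using Dint[OF k] bpos[of k] ppos[of k] by (intro mult_left_mono) auto
      then show "- (beta k * (sigma k)\<^sup>2 / p k) \<le> beta k * (\<integral>\<omega>. S k \<omega> \<partial>M) - beta k / p k * (\<integral>\<omega>. (D k \<omega>)\<^sup>2 \<partial>M)"
        using Sint[OF k] by simp
    qed
    finally show ?thesis unfolding c_def by (simp add: sum_negf)
  qed
  ultimately have "(\<integral>\<omega>. LHS \<omega> \<partial>M) \<ge> (\<integral>\<omega>. R \<omega> \<partial>M)" by linarith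
  then show ?thesis unfolding LHS_def R_def .
qed

end
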